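(* Let $n\ge 2$, let $\sigma,\tau\in S_n$ with ${\rm hd}(\sigma,\tau)=d$, and let $m\in\{1,\ldots,n-1\}$. Assume that the disjoint cycle decomposition of $\sigma^{-1}\tau$ has no cycle factor of odd length $\ell$ with $3\le \ell\le 2m+1$. Then ${\rm hd}\big(\sigma^{{\sf CT}^m},\tau^{{\sf CT}^m}\big)\ge d-2m$.
   Context: $S_n$ is the symmetric group on the symbols $\{0,1,\ldots,n-1\}$. Permutations are composed from left to right: for $\sigma,\tau\in S_n$, $\tau\sigma(x):=\sigma(\tau(x))$; in particular $\sigma^{-1}\tau(x)=\tau(\sigma^{-1}(x))$. The Hamming distance of $\sigma,\tau\in S_n$ is ${\rm hd}(\sigma,\tau)=|\{x\in\{0,\ldots,n-1\}:\sigma(x)\neq\tau(x)\}|$. The contraction of $\sigma\in S_n$ is the permutation $\sigma^{\sf CT}\in S_{n-1}$ (on $\{0,\ldots,n-2\}$) defined by $\sigma^{\sf CT}(x)=\sigma(n-1)$ if $x=\sigma^{-1}(n-1)$ and $\sigma^{\sf CT}(x)=\sigma(x)$ otherwise; equivalently, $\sigma^{\sf CT}$ is obtained by deleting the symbol $n-1$ from the disjoint cycle notation of $\sigma$. For $1\le m\le n-1$, the $m$th contraction is defined recursively by $\sigma^{{\sf CT}^1}=\sigma^{\sf CT}$ and $\sigma^{{\sf CT}^m}=(\sigma^{{\sf CT}^{m-1}})^{\sf CT}\in S_{n-m}$ (each contraction removes the currently largest symbol). *)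

theory Defs
  imports "HOL-Combinatorics.Combinatorics"
begin

text \<open>Permutations of S_n are functions nat => nat with "p permutes {..<n}".
  Composition is left to right: sigma^{-1} tau (x) = tau (sigma^{-1} x), i.e. tau o inv sigma.\<close>

definition hamming :: "nat \<Rightarrow> (nat \<Rightarrow> nat) \<Rightarrow> (nat \<Rightarrow> nat) \<Rightarrow> nat" where
  "hamming n \<sigma> \<tau> = card {x. x < n \<and> \<sigma> x \<noteq> \<tau> x}"

definition contract :: "nat \<Rightarrow> (nat \<Rightarrow> nat) \<Rightarrow> (nat \<Rightarrow> nat)" where
  "contract n \<sigma> = (\<lambda>x. if x < n - 1 then
       (if x = inv \<sigma> (n - 1) then \<sigma> (n - 1) else \<sigma> x) else x)"

fun contract_iter :: "nat \<Rightarrow> nat \<Rightarrow> (nat \<Rightarrow> nat) \<Rightarrow> (nat \<Rightarrow> nat)" where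
  "contract_iter n 0 \<sigma> = \<sigma>"
| "contract_iter n (Suc m) \<sigma> = contract (n - m) (contract_iter n m \<sigma>)"

end

theory Submission
  imports Defs
begin

definition ret :: "nat \<Rightarrow> (nat \<Rightarrow> nat) \<Rightarrow> nat \<Rightarrow> nat" where
  "ret k f y = (if \<exists>j>0. (f ^^ j) y < k then (f ^^ (LEAST j. 0 < j \<and> (f ^^ j) y < k)) y else k)"

lemma ret_P1: "f y < k \<Longrightarrow> ret k f y = f y"
proof -
  assume a: "f y < k"
  have "(LEAST j. 0 < j \<and> (f ^^ j) y < k) = 1"
    by (rule Least_equality) (use a in auto)
  moreover have "\<exists>j>0. (f ^^ j) y < k" using a by (intro exI[of _ 1]) simp
  ultimately show ?thesis using a unfolding ret_def by simp
qed

lemma ret_P2: "f y \<ge> k \<Longrightarrow> ret k f y = ret k f (f y)"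
proof -
  assume a: "f y \<ge> k"
  have ex: "(\<exists>j>0. (f ^^ j) y < k) \<longleftrightarrow> (\<exists>j>0. (f ^^ j) (f y) < k)"
  proof
    assume "\<exists>j>0. (f ^^ j) y < k"
    then obtain j where j: "j > 0" "(f ^^ j) y < k" by blast
    then obtain i where i: "j = Suc i" by (cases j) auto
    have "i > 0" using a j i by (cases i) auto
    moreover have "(f ^^ i) (f y) < k" using j i by (simp add: funpow_Suc_right del: funpow.simps)
    ultimately show "\<exists>j>0. (f ^^ j) (f y) < k" by blast
  next
    assume "\<exists>j>0. (f ^^ j) (f y) < k"
    then obtain j where j: "j > 0" "(f ^^ j) (f y) < k" by blast
    then have "(f ^^ Suc j) y < k" by (simp add: funpow_Suc_right del: funpow.simps)
    then show "\<exists>j>0. (f ^^ j) y < k" by blast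
  qed
  show ?thesis
  proof (cases "\<exists>j>0. (f ^^ j) y < k")
    case True
    then obtain j where j: "j > 0" "(f ^^ j) y < k" by blast
    have L: "(LEAST j. 0 < j \<and> (f ^^ j) y < k) = Suc (LEAST m. 0 < Suc m \<and> (f ^^ Suc m) y < k)"
      by (rule Least_Suc) (use j in auto)
    have eq: "(\<lambda>m. 0 < Suc m \<and> (f ^^ Suc m) y < k) = (\<lambda>m. 0 < m \<and> (f ^^ m) (f y) < k)"
    proof
      fix m show "(0 < Suc m \<and> (f ^^ Suc m) y < k) = (0 < m \<and> (f ^^ m) (f y) < k)"
        using a by (cases m) (auto simp add: funpow_Suc_right simp del: funpow.simps)
    qed
    show ?thesis using True ex unfolding ret_def L eq
      by (simp add: funpow_Suc_right del: funpow.simps)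
  next
    case False
    then have "\<not> (\<exists>j>0. (f ^^ j) (f y) < k)" using ex by blast
    then show ?thesis using False unfolding ret_def by (simp only: if_False)
  qed
qed

lemma ret_lt_iff: "ret k f y < k \<longleftrightarrow> (\<exists>j>0. (f ^^ j) y < k)"
proof
  assume "ret k f y < k" then show "\<exists>j>0. (f ^^ j) y < k"
    unfolding ret_def by (auto split: if_splits)
next
  assume h: "\<exists>j>0. (f ^^ j) y < k"
  then have "0 < (LEAST j. 0 < j \<and> (f ^^ j) y < k) \<and> (f ^^ (LEAST j. 0 < j \<and> (f ^^ j) y < k)) y < k"
    by (metis (mono_tags, lifting) LeastI)
  then show "ret k f y < k" using h unfolding ret_def by simp
qed

lemma ret_induct [consumes 1, case_names base step]:
  assumes "ret k f a < k"
    and "\<And>a. f a < k \<Longrightarrow> P a"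
    and "\<And>a. f a \<ge> k \<Longrightarrow> ret k f (f a) < k \<Longrightarrow> P (f a) \<Longrightarrow> P a"
  shows "P a"
proof -
  obtain j where j: "j > 0" "(f ^^ j) a < k" using assms(1) ret_lt_iff by blast
  have "\<forall>a. 0 < j \<and> (f ^^ j) a < k \<longrightarrow> P a"
  proof (induction j)
    case 0 then show ?case by simp
  next
    case (Suc j)
    show ?case
    proof (intro allI impI)
      fix a assume h: "0 < Suc j \<and> (f ^^ Suc j) a < k"
      show "P a"
      proof (cases "f a < k")
        case True then show ?thesis using assms(2) by blast
      next
        case False
        then have j0: "j > 0" using h by (cases j) auto
        have fj: "(f ^^ j) (f a) < k" using h by (simp add: funpow_Suc_right del: funpow.simps)
        then have "P (f a)" using Suc.IH j0 by blast
        moreover have "ret k f (f a) < k" using fj j0 ret_lt_iff by blast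
        ultimately show ?thesis using assms(3) False by simp
      qed
    qed
  qed
  then show ?thesis using j by blast
qed


lemma ret_lt:
  assumes "f permutes {..<n}" "K \<le> n" "a < K"
  shows "ret K f a < K"
proof -
  have "permutation f" using assms(1) permutation_permutes by blast
  then obtain N where N: "(f ^^ N) = id" "N > 0" by (rule permutation_is_nilpotent)
  then have "(f ^^ N) a < K" using assms by simp
  then show ?thesis using N ret_lt_iff by blast
qed

lemma ret_back:
  assumes p: "f permutes {..<n}" and r: "ret K f a < K"
  shows "inv f (ret K f a) = a \<or> (inv f (ret K f a) \<ge> K \<and>
           ret K (inv f) (inv f (ret K f a)) = (if a < K then a else ret K (inv f) a))"
  using r
proof (induction a rule: ret_induct)
  case (base a)
  then show ?case using ret_P1[of f a K] permutes_inverses[OF p] by simp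
next
  case (step a)
  have e: "ret K f a = ret K f (f a)" using step ret_P2 by metis
  have ia: "inv f (f a) = a" using permutes_inverses[OF p] by simp
  have o: "ret K (inv f) (f a) = (if a < K then a else ret K (inv f) a)"
  proof (cases "a < K")
    case True then show ?thesis using ret_P1[of "inv f" "f a" K] ia by simp
  next
    case False then show ?thesis using ret_P2[of K "inv f" "f a"] ia by simp
  qed
  from step(3) show ?case
  proof
    assume "inv f (ret K f (f a)) = f a"
    then show ?thesis using e o step(1) by simp
  next
    assume "K \<le> inv f (ret K f (f a)) \<and> ret K (inv f) (inv f (ret K f (f a))) =
      (if f a < K then f a else ret K (inv f) (f a))"
    then show ?thesis using e o step(1) by simp
  qed
qed

lemma ret_inj:
  assumes p: "f permutes {..<n}" and "K \<le> n" "a < K" "b < K" "ret K f a = ret K f b"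
  shows "a = b"
proof -
  have ra: "ret K f a < K" and rb: "ret K f b < K" using ret_lt assms by blast+
  note A = ret_back[OF p ra] and B = ret_back[OF p rb]
  show ?thesis using A B assms(3-5) by auto
qed

lemma ret_owner:
  assumes p: "f permutes {..<n}" and r: "ret K (inv f) y < K" and y: "y \<ge> K"
  shows "ret K f (ret K (inv f) y) = ret K f y"
proof -
  have "y \<ge> K \<longrightarrow> ret K f (ret K (inv f) y) = ret K f y"
    using r
  proof (induction y rule: ret_induct)
    case (base a)
    have "f (inv f a) = a" using permutes_inverses[OF p] by simp
    then show ?case using base ret_P1[of "inv f" a K] ret_P2[of K f "inv f a"] by auto
  next
    case (step a)
    have fa: "f (inv f a) = a" using permutes_inverses[OF p] by simp
    show ?case
    proof
      assume "K \<le> a"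
      have "ret K (inv f) a = ret K (inv f) (inv f a)" using step(1) ret_P2 by metis
      moreover have "ret K f (inv f a) = ret K f a" using \<open>K \<le> a\<close> ret_P2[of K f "inv f a"] fa by simp
      ultimately show "ret K f (ret K (inv f) a) = ret K f a" using step by simp
    qed
  qed
  then show ?thesis using y by blast
qed


definition G :: "nat \<Rightarrow> (nat \<Rightarrow> nat) \<Rightarrow> nat \<Rightarrow> nat" where
  "G K f = (\<lambda>x. if x < K then ret K f x else x)"

lemma G_permutes:
  assumes p: "f permutes {..<n}" and K: "K \<le> n"
  shows "G K f permutes {..<K}"
proof (rule bij_imp_permutes)
  have sub: "G K f ` {..<K} \<subseteq> {..<K}" using ret_lt[OF p K] by (auto simp: G_def)
  have inj: "inj_on (G K f) {..<K}"
    by (rule inj_onI) (use ret_inj[OF p K] in \<open>auto simp: G_def\<close>)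
  have "G K f ` {..<K} = {..<K}" using endo_inj_surj[OF _ sub inj] by simp
  then show "bij_betw (G K f) {..<K} {..<K}" using inj by (simp add: bij_betw_def)
next
  fix x assume "x \<notin> {..<K}" then show "G K f x = x" by (simp add: G_def)
qed

lemma ret_level1:
  assumes "ret K f x < K - 1"
  shows "ret (K - 1) f x = ret K f x"
proof -
  have r: "ret K f x < K" using assms by simp
  have "ret K f x < K - 1 \<longrightarrow> ret (K - 1) f x = ret K f x"
    using r
  proof (induction x rule: ret_induct)
    case (base a)
    then show ?case using ret_P1[of f a K] ret_P1[of f a "K-1"] by auto
  next
    case (step a)
    have e1: "ret K f a = ret K f (f a)" using step(1) ret_P2[of K f a] by blast
    have e2: "ret (K - 1) f a = ret (K - 1) f (f a)" using step(1) ret_P2[of "K-1" f a] by simp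
    show ?case unfolding e1 e2 using step(3) .
  qed
  then show ?thesis using assms by blast
qed

lemma ret_level2:
  assumes "ret K f x = K - 1" "K \<ge> 1"
  shows "ret (K - 1) f x = ret (K - 1) f (K - 1)"
proof -
  have r: "ret K f x < K" using assms by simp
  have "ret K f x = K - 1 \<longrightarrow> ret (K - 1) f x = ret (K - 1) f (K - 1)"
    using r
  proof (induction x rule: ret_induct)
    case (base a)
    then show ?case using ret_P1[of f a K] ret_P2[of "K-1" f a] by auto
  next
    case (step a)
    have e1: "ret K f a = ret K f (f a)" using step(1) ret_P2[of K f a] by blast
    have e2: "ret (K - 1) f a = ret (K - 1) f (f a)" using step(1) ret_P2[of "K-1" f a] by simp
    show ?case unfolding e1 e2 using step(3) .
  qed
  then show ?thesis using assms by blast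
qed

lemma contract_G:
  assumes p: "f permutes {..<n}" and K: "K \<le> n" "2 \<le> K"
  shows "contract K (G K f) = G (K - 1) f"
proof
  fix x
  have gp: "G K f permutes {..<K}" using G_permutes[OF p K(1)] .
  show "contract K (G K f) x = G (K - 1) f x"
  proof (cases "x < K - 1")
    case False then show ?thesis by (simp add: contract_def G_def)
  next
    case True
    have xK: "x < K" using True by simp
    have gx: "G K f x = ret K f x" using xK by (simp add: G_def)
    have iv: "inv (G K f) (K - 1) = x \<longleftrightarrow> ret K f x = K - 1"
      using permutes_inv_eq[OF gp] gx by simp
    have rx: "ret K f x < K" using ret_lt[OF p K(1)] True by simp
    show ?thesis
    proof (cases "ret K f x = K - 1")
      case T: True
      have r1: "ret K f (K - 1) < K" using ret_lt[OF p K(1)] K by simp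
      have "ret K f (K - 1) \<noteq> K - 1"
      proof
        assume "ret K f (K - 1) = K - 1"
        then have "x = K - 1" using ret_inj[OF p K(1), of x "K - 1"] T True K by simp
        then show False using True by simp
      qed
      then have r2: "ret K f (K - 1) < K - 1" using r1 by simp
      have "G (K - 1) f x = ret (K - 1) f x" using True by (simp add: G_def)
      also have "\<dots> = ret (K - 1) f (K - 1)" using ret_level2[OF T] K by simp
      also have "\<dots> = ret K f (K - 1)" using ret_level1[OF r2] .
      finally show ?thesis using True T iv K by (simp add: contract_def G_def)
    next
      case F: False
      then have r2: "ret K f x < K - 1" using rx by simp
      have "G (K - 1) f x = ret K f x" using True ret_level1[OF r2] by (simp add: G_def)
      then show ?thesis using True F iv gx by (simp add: contract_def)
    qed
  qed
qed

lemma contract_iter_G: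
  assumes p: "\<sigma> permutes {..<n}" 
  shows "j \<le> n - 1 \<Longrightarrow> contract_iter n j \<sigma> = G (n - j) \<sigma>"
proof (induction j)
  case 0
  show ?case
  proof
    fix x show "contract_iter n 0 \<sigma> x = G (n - 0) \<sigma> x"
    proof (cases "x < n")
      case True
      then have "\<sigma> x < n" using permutes_in_image[OF p] by simp
      then show ?thesis using True ret_P1[of \<sigma> x n] by (simp add: G_def)
    next
      case False then show ?thesis using permutes_not_in[OF p] by (simp add: G_def)
    qed
  qed
next
  case (Suc j)
  then have "contract_iter n j \<sigma> = G (n - j) \<sigma>" by simp
  then have "contract_iter n (Suc j) \<sigma> = contract (n - j) (G (n - j) \<sigma>)" by simp
  also have "\<dots> = G (n - j - 1) \<sigma>" using contract_G[OF p, of "n - j"] Suc.prems by simp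
  finally have c: "contract_iter n (Suc j) \<sigma> = G (n - j - 1) \<sigma>" .
  have eq: "n - j - 1 = n - Suc j" by simp
  show ?case using c unfolding eq .
qed


lemma card_sum_fibres:
  assumes "finite E" "finite V"
  shows "(\<Sum>x\<in>V. card {e\<in>E. u e = x}) = card {e\<in>E. u e \<in> V}"
proof -
  have "{e\<in>E. u e \<in> V} = (\<Union>x\<in>V. {e\<in>E. u e = x})" by auto
  moreover have "card (\<Union>x\<in>V. {e\<in>E. u e = x}) = (\<Sum>x\<in>V. card {e\<in>E. u e = x})"
    by (rule card_UN_disjoint) (use assms in auto)
  ultimately show ?thesis by simp
qed

lemma forest_lemma:
  fixes V :: "'a set" and E :: "'b set" and u v :: "'b \<Rightarrow> 'a"
  assumes "finite V" "finite E" "\<forall>x\<in>V. \<exists>e\<in>E. u e = x \<or> v e = x" "card E < card V"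
  shows "\<exists>W\<subseteq>V. W \<noteq> {} \<and> (\<forall>e\<in>E. (u e \<in> W \<or> v e \<in> W) \<longrightarrow> u e \<in> W \<and> v e \<in> W)
           \<and> card W = card {e\<in>E. u e \<in> W} + 1"
  using assms
proof (induction "card V" arbitrary: V E rule: less_induct)
  case less
  note fV = less.prems(1) and fE = less.prems(2) and deg = less.prems(3) and lt = less.prems(4)
  define I where "I x = {e\<in>E. u e = x \<or> v e = x}" for x
  show ?case
  proof (cases "\<exists>x\<in>V. \<exists>e0. I x = {e0} \<and> u e0 \<noteq> v e0")
    case False
    have d2: "2 \<le> card {e\<in>E. u e = x} + card {e\<in>E. v e = x}" if xV: "x \<in> V" for x
    proof -
      obtain e where e: "e \<in> E" "u e = x \<or> v e = x" using deg xV by blast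
      have fI: "finite (I x)" using fE by (simp add: I_def)
      have Iu: "I x = {e\<in>E. u e = x} \<union> {e\<in>E. v e = x}" by (auto simp: I_def)
      have cI: "card (I x) \<le> card {e\<in>E. u e = x} + card {e\<in>E. v e = x}"
        unfolding Iu by (rule card_Un_le)
      show ?thesis
      proof (cases "card (I x) \<ge> 2")
        case True then show ?thesis using cI by simp
      next
        case F2: False
        have "e \<in> I x" using e by (simp add: I_def)
        then have "card (I x) \<ge> 1" using fI card_gt_0_iff[of "I x"] by (auto simp del: One_nat_def)
        then have "card (I x) = 1" using F2 by simp
        then obtain e0 where e0: "I x = {e0}" by (metis card_1_singletonE)
        then have "u e0 = v e0" using False xV by blast
        moreover have "e0 \<in> E" "u e0 = x \<or> v e0 = x" using e0 unfolding I_def by auto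
        ultimately have "e0 \<in> {e\<in>E. u e = x}" "e0 \<in> {e\<in>E. v e = x}" by auto
        moreover have "finite {e\<in>E. u e = x}" "finite {e\<in>E. v e = x}" using fE by auto
        ultimately have "card {e\<in>E. u e = x} > 0" "card {e\<in>E. v e = x} > 0"
          using card_gt_0_iff by blast+
        then show ?thesis by simp
      qed
    qed
    have "(\<Sum>x\<in>V. 2) \<le> (\<Sum>x\<in>V. card {e\<in>E. u e = x} + card {e\<in>E. v e = x})"
      by (rule sum_mono) (use d2 in auto)
    also have "\<dots> = card {e\<in>E. u e \<in> V} + card {e\<in>E. v e \<in> V}"
      by (simp add: sum.distrib card_sum_fibres[OF fE fV])
    also have "\<dots> \<le> card E + card E"
      by (intro add_mono card_mono) (use fE in auto)
    finally show ?thesis using lt by simp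
  next
    case True
    then obtain x e0 where xV: "x \<in> V" and Ix: "I x = {e0}" and ne: "u e0 \<noteq> v e0" by blast
    have e0E: "e0 \<in> E" and e0x: "u e0 = x \<or> v e0 = x" using Ix unfolding I_def by auto
    define oth where "oth = (if u e0 = x then v e0 else u e0)"
    have ox: "oth \<noteq> x" using ne e0x unfolding oth_def by (cases "u e0 = x") simp_all
    have ends: "(u e0 = x \<and> v e0 = oth) \<or> (u e0 = oth \<and> v e0 = x)" using e0x by (auto simp: oth_def)
    have onlyx: "\<And>e. e \<in> E \<Longrightarrow> (u e = x \<or> v e = x) \<Longrightarrow> e = e0" using Ix unfolding I_def by blast
    show ?thesis
    proof (cases "oth \<in> V \<and> I oth = {e0}")
      case True
      have onlyo: "\<And>e. e \<in> E \<Longrightarrow> (u e = oth \<or> v e = oth) \<Longrightarrow> e = e0" using True unfolding I_def by blast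
      define W where "W = {x, oth}"
      have "W \<subseteq> V" using True xV by (simp add: W_def)
      moreover have "W \<noteq> {}" by (simp add: W_def)
      have ue: "u e0 \<in> W" "v e0 \<in> W" using ends unfolding W_def by auto
      have only: "e = e0" if "e \<in> E" "u e \<in> W \<or> v e \<in> W" for e
        using that onlyx onlyo unfolding W_def by auto
      moreover have "\<forall>e\<in>E. (u e \<in> W \<or> v e \<in> W) \<longrightarrow> u e \<in> W \<and> v e \<in> W"
        using only ue by blast
      moreover have "{e\<in>E. u e \<in> W} = {e0}"
        using only ue e0E by blast
      moreover have "card W = 2" using ox by (simp add: W_def)
      ultimately show ?thesis by (intro exI[of _ W]) auto
    next
      case False
      define V' where "V' = V - {x}"
      define E' where "E' = E - {e0}"
      have cV0: "card V > 0" using xV fV card_gt_0_iff by blast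
      have cE0: "card E > 0" using e0E fE card_gt_0_iff by blast
      have cV: "card V' < card V" using xV fV cV0 by (simp add: V'_def)
      have fV': "finite V'" "finite E'" using fV fE by (auto simp: V'_def E'_def)
      have cE: "card E' < card V'" using lt e0E xV fE fV cV0 cE0 by (simp add: V'_def E'_def)
      have deg': "\<forall>w\<in>V'. \<exists>e\<in>E'. u e = w \<or> v e = w"
      proof
        fix w assume w: "w \<in> V'"
        then obtain e where e: "e \<in> E" "u e = w \<or> v e = w" using deg V'_def by blast
        show "\<exists>e\<in>E'. u e = w \<or> v e = w"
        proof (cases "e = e0")
          case False then show ?thesis using e by (auto simp: E'_def)
        next
          case True
          then have "w = oth" using e w ends by (auto simp: V'_def) 
          then have "w \<in> V" "I oth \<noteq> {e0}" using w False by (auto simp: V'_def)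
          moreover have "e0 \<in> I oth" using e True \<open>w = oth\<close> by (auto simp: I_def)
          ultimately obtain e' where "e' \<in> I oth" "e' \<noteq> e0" by blast
          then show ?thesis using \<open>w = oth\<close> by (auto simp: I_def E'_def)
        qed
      qed
      obtain W' where W': "W' \<subseteq> V'" "W' \<noteq> {}"
        "\<forall>e\<in>E'. (u e \<in> W' \<or> v e \<in> W') \<longrightarrow> u e \<in> W' \<and> v e \<in> W'"
        "card W' = card {e\<in>E'. u e \<in> W'} + 1"
        using less.hyps[OF cV fV' deg' cE] by blast
      have xW': "x \<notin> W'" using W'(1) by (auto simp: V'_def)
      show ?thesis
      proof (cases "oth \<in> W'")
        case True
        define W where "W = insert x W'"
        have "W \<subseteq> V" using W'(1) xV by (auto simp: W_def V'_def)
        moreover have "W \<noteq> {}" by (simp add: W_def)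
        moreover have "\<forall>e\<in>E. (u e \<in> W \<or> v e \<in> W) \<longrightarrow> u e \<in> W \<and> v e \<in> W"
        proof (intro ballI impI)
          fix e assume e: "e \<in> E" "u e \<in> W \<or> v e \<in> W"
          show "u e \<in> W \<and> v e \<in> W"
          proof (cases "e = e0")
            case True then show ?thesis using ends \<open>oth \<in> W'\<close> by (auto simp: W_def)
          next
            case False
            then have "u e \<noteq> x" "v e \<noteq> x" using onlyx e(1) by auto
            then show ?thesis using W'(3) e False by (auto simp: W_def E'_def)
          qed
        qed
        moreover have "{e\<in>E. u e \<in> W} = insert e0 {e\<in>E'. u e \<in> W'}"
        proof -
          have u0: "u e0 \<in> W" using ends \<open>oth \<in> W'\<close> by (auto simp: W_def)
          show ?thesis
          proof (rule set_eqI)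
            fix e show "e \<in> {e\<in>E. u e \<in> W} \<longleftrightarrow> e \<in> insert e0 {e\<in>E'. u e \<in> W'}"
            proof (cases "e = e0")
              case True then show ?thesis using u0 e0E by simp
            next
              case False
              then have "u e \<noteq> x" if "e \<in> E" using onlyx that by blast
              then show ?thesis using False by (auto simp: W_def E'_def)
            qed
          qed
        qed
        moreover have "card W = card W' + 1" using xW' fV' W'(1) by (simp add: W_def finite_subset)
        moreover have "card (insert e0 {e\<in>E'. u e \<in> W'}) = card {e\<in>E'. u e \<in> W'} + 1"
          using fV' by (simp add: E'_def)
        ultimately show ?thesis using W'(4) by (intro exI[of _ W]) auto
      next
        case False
        have "\<forall>e\<in>E. (u e \<in> W' \<or> v e \<in> W') \<longrightarrow> u e \<in> W' \<and> v e \<in> W'"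
        proof (intro ballI impI)
          fix e assume e: "e \<in> E" "u e \<in> W' \<or> v e \<in> W'"
          have "e \<noteq> e0"
          proof
            assume "e = e0"
            then have "u e \<notin> W'" "v e \<notin> W'" using ends xW' False by auto
            then show False using e by blast
          qed
          then have "e \<in> E'" using e by (simp add: E'_def)
          then show "u e \<in> W' \<and> v e \<in> W'" using W'(3) e by blast
        qed
        moreover have "{e\<in>E. u e \<in> W'} = {e\<in>E'. u e \<in> W'}"
        proof -
          have "u e0 \<notin> W'" using ends xW' False by auto
          then show ?thesis by (auto simp: E'_def)
        qed
        moreover have "W' \<subseteq> V" using W'(1) by (auto simp: V'_def)
        ultimately show ?thesis using W' by (intro exI[of _ W']) auto
      qed
    qed
  qed
qed


lemma odd_orbit_exists:
  assumes g: "permutation g" and "finite U" and inv: "\<forall>z\<in>U. g z \<in> U" and "odd (card U)"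
  shows "\<exists>z\<in>U. odd (card (orbit g z))"
proof (rule ccontr)
  assume "\<not> ?thesis"
  then have ev: "\<forall>z\<in>U. even (card (orbit g z))" by blast
  have "even (card U)"
    using assms(2) inv ev
  proof (induction "card U" arbitrary: U rule: less_induct)
    case less
    show ?case
    proof (cases "U = {}")
      case True then show ?thesis by simp
    next
      case False
      then obtain z where z: "z \<in> U" by blast
      define Ob where "Ob = orbit g z"
      have OU: "Ob \<subseteq> U"
      proof
        fix y assume "y \<in> Ob"
        then show "y \<in> U" unfolding Ob_def
          by (induction rule: orbit.induct) (use less.prems z in auto)
      qed
      have fO: "finite Ob" using OU less.prems(1) finite_subset by blast
      have zO: "z \<in> Ob" unfolding Ob_def using permutation_self_in_orbit[OF g] .
      have inv2: "\<forall>w\<in>U - Ob. g w \<in> U - Ob"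
      proof
        fix w assume w: "w \<in> U - Ob"
        have "g w \<in> U" using w less.prems(2) by blast
        moreover have "g w \<notin> Ob"
        proof
          assume gw: "g w \<in> Ob"
          have "cyclic_on g Ob" unfolding Ob_def by (rule cyclic_on_orbit'[OF g])
          then have "orbit g (g w) = Ob" using gw by (rule orbit_cyclic_eq3)
          moreover have "orbit g (g w) = orbit g w" by (rule permutation_orbit_step[OF g])
          moreover have "w \<in> orbit g w" by (rule permutation_self_in_orbit[OF g])
          ultimately show False using w by blast
        qed
        ultimately show "g w \<in> U - Ob" by blast
      qed
      have cd: "card (U - Ob) = card U - card Ob" using OU fO by (simp add: card_Diff_subset)
      have cO: "card Ob > 0" using zO fO card_gt_0_iff by blast
      have cOU: "card Ob \<le> card U" using OU less.prems(1) card_mono by blast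
      have c: "card (U - Ob) < card U" using cd cO cOU by linarith
      have "even (card (U - Ob))"
        using less.hyps[OF c] less.prems(1) inv2 less.prems(3) by blast
      moreover have "even (card Ob)" using less.prems(3) z unfolding Ob_def by blast
      moreover have "card (U - Ob) = card U - card Ob" using OU fO by (simp add: card_Diff_subset)
      moreover have "card Ob \<le> card U" using OU less.prems(1) card_mono by blast
      ultimately show ?thesis by auto
    qed
  qed
  then show False using assms(4) by simp
qed


lemma new_agree_bound:
  fixes n k :: nat and \<sigma> \<tau> :: "nat \<Rightarrow> nat"
  assumes ps: "\<sigma> permutes {..<n}" and pt: "\<tau> permutes {..<n}" and kn: "k \<le> n"
    and cyc: "\<forall>x<n. \<not> (odd (card (orbit (\<tau> \<circ> inv \<sigma>) x))
                    \<and> 3 \<le> card (orbit (\<tau> \<circ> inv \<sigma>) x)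
                    \<and> card (orbit (\<tau> \<circ> inv \<sigma>) x) \<le> 2 * (n - k) + 1)"
  shows "card {x. x < k \<and> \<sigma> x \<noteq> \<tau> x \<and> ret k \<sigma> x = ret k \<tau> x}
           \<le> (n - k) + card {y. k \<le> y \<and> y < n \<and> \<sigma> y = \<tau> y}"
proof (rule ccontr)
  define X where "X = {x. x < k \<and> \<sigma> x \<noteq> \<tau> x \<and> ret k \<sigma> x = ret k \<tau> x}"
  define D where "D = {k..<n}"
  define Df where "Df = {y. k \<le> y \<and> y < n \<and> \<sigma> y = \<tau> y}"
  define us where "us = ret k (inv \<sigma>)"
  define ut where "ut = ret k (inv \<tau>)"
  define E where "E = (\<lambda>y. (y, 0::nat)) ` D \<union> (\<lambda>y. (y, 1::nat)) ` Df"
  define u where "u = (\<lambda>e::nat \<times> nat. us (fst e))"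
  define v where "v = (\<lambda>e::nat \<times> nat. ut (fst e))"
  assume "\<not> card X \<le> (n - k) + card Df"
  then have big: "card X > (n - k) + card Df" unfolding X_def Df_def by simp
  have psi: "inv \<sigma> permutes {..<n}" using permutes_inv[OF ps] .
  have pti: "inv \<tau> permutes {..<n}" using permutes_inv[OF pt] .
  have fD: "finite D" by (simp add: D_def)
  have DfD: "Df \<subseteq> D" by (auto simp: Df_def D_def)
  have fDf: "finite Df" using DfD fD finite_subset by blast
  have cD: "card D = n - k" by (simp add: D_def)
  have fE: "finite E" using fD fDf by (simp add: E_def)
  have cE: "card E = card D + card Df"
  proof -
    have "card E = card ((\<lambda>y. (y, 0::nat)) ` D) + card ((\<lambda>y. (y, 1::nat)) ` Df)"
      unfolding E_def by (rule card_Un_disjoint) (use fD fDf in auto)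
    also have "\<dots> = card D + card Df" by (simp add: card_image inj_on_def)
    finally show ?thesis .
  qed
  have fX: "finite X" by (simp add: X_def)
  have Xk: "\<And>x. x \<in> X \<Longrightarrow> x < k" by (simp add: X_def)
  have \<sigma>n: "\<And>x. x < n \<Longrightarrow> \<sigma> x < n" using permutes_in_image[OF ps] by simp
  have \<tau>n: "\<And>x. x < n \<Longrightarrow> \<tau> x < n" using permutes_in_image[OF pt] by simp
  have i\<sigma>n: "\<And>x. x < n \<Longrightarrow> inv \<sigma> x < n" using permutes_in_image[OF psi] by simp
  have i\<tau>n: "\<And>x. x < n \<Longrightarrow> inv \<tau> x < n" using permutes_in_image[OF pti] by simp
  have is1: "\<And>x. inv \<sigma> (\<sigma> x) = x" "\<And>x. \<sigma> (inv \<sigma> x) = x" using permutes_inverses[OF ps] by auto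
  have it1: "\<And>x. inv \<tau> (\<tau> x) = x" "\<And>x. \<tau> (inv \<tau> x) = x" using permutes_inverses[OF pt] by auto
  have deg: "\<forall>x\<in>X. \<exists>e\<in>E. u e = x \<or> v e = x"
  proof
    fix x assume xX: "x \<in> X"
    then have xk: "x < k" and ne: "\<sigma> x \<noteq> \<tau> x" and eq: "ret k \<sigma> x = ret k \<tau> x"
      by (auto simp: X_def)
    have xn: "x < n" using xk kn by simp
    show "\<exists>e\<in>E. u e = x \<or> v e = x"
    proof (cases "\<sigma> x < k")
      case False
      have "us (\<sigma> x) = x" unfolding us_def using ret_P1[of "inv \<sigma>" "\<sigma> x" k] is1 xk by simp
      moreover have "(\<sigma> x, 0) \<in> E" using False \<sigma>n[OF xn] by (auto simp: E_def D_def)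
      ultimately show ?thesis unfolding u_def by force
    next
      case True
      have "\<not> \<tau> x < k"
      proof
        assume "\<tau> x < k"
        then have "ret k \<tau> x = \<tau> x" by (rule ret_P1)
        moreover have "ret k \<sigma> x = \<sigma> x" using True by (rule ret_P1)
        ultimately show False using eq ne by simp
      qed
      then have "ut (\<tau> x) = x" unfolding ut_def using ret_P1[of "inv \<tau>" "\<tau> x" k] it1 xk by simp
      moreover have "(\<tau> x, 0) \<in> E" using \<open>\<not> \<tau> x < k\<close> \<tau>n[OF xn] by (auto simp: E_def D_def)
      ultimately show ?thesis unfolding v_def by force
    qed
  qed
  have ltE: "card E < card X" using big cE cD by simp
  obtain W where W: "W \<subseteq> X" "W \<noteq> {}"
      "\<forall>e\<in>E. (u e \<in> W \<or> v e \<in> W) \<longrightarrow> u e \<in> W \<and> v e \<in> W"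
      "card W = card {e\<in>E. u e \<in> W} + 1"
    using forest_lemma[OF fX fE deg ltE] by blast
  define DW where "DW = {y\<in>D. us y \<in> W}"
  have clos: "\<And>y. y \<in> D \<Longrightarrow> us y \<in> W \<or> ut y \<in> W \<Longrightarrow> us y \<in> W \<and> ut y \<in> W"
  proof -
    fix y assume "y \<in> D" "us y \<in> W \<or> ut y \<in> W"
    moreover have "(y, 0) \<in> E" using \<open>y \<in> D\<close> by (simp add: E_def)
    ultimately show "us y \<in> W \<and> ut y \<in> W" using W(3) unfolding u_def v_def by fastforce
  qed
  have fDW: "finite DW" using fD by (simp add: DW_def)
  have cEW: "card {e\<in>E. u e \<in> W} = card DW + card (DW \<inter> Df)"
  proof -
    have "{e\<in>E. u e \<in> W} = (\<lambda>y. (y, 0::nat)) ` DW \<union> (\<lambda>y. (y, 1::nat)) ` (DW \<inter> Df)"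
      using DfD by (auto simp: E_def DW_def u_def)
    moreover have "card ((\<lambda>y. (y, 0::nat)) ` DW \<union> (\<lambda>y. (y, 1::nat)) ` (DW \<inter> Df))
        = card ((\<lambda>y. (y, 0::nat)) ` DW) + card ((\<lambda>y. (y, 1::nat)) ` (DW \<inter> Df))"
      by (rule card_Un_disjoint) (use fDW in auto)
    moreover have "card ((\<lambda>y. (y, 0::nat)) ` DW) = card DW" by (simp add: card_image inj_on_def)
    moreover have "card ((\<lambda>y. (y, 1::nat)) ` (DW \<inter> Df)) = card (DW \<inter> Df)"
      by (simp add: card_image inj_on_def)
    ultimately show ?thesis by simp
  qed
  define U where "U = W \<union> (DW - Df)"
  have WD: "W \<inter> (DW - Df) = {}" using W(1) Xk unfolding DW_def D_def by fastforce
  have fW: "finite W" using W(1) fX finite_subset by blast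
  have cU: "card U = 2 * card DW + 1"
  proof -
    have "card U = card W + card (DW - Df)" unfolding U_def
      by (rule card_Un_disjoint) (use fW fDW WD in auto)
    moreover have "card (DW - Df) = card DW - card (DW \<inter> Df)"
      by (metis Diff_Int2 Diff_Int_distrib2 card_Diff_subset_Int fDW finite_Int inf.idem) 
    moreover have "card (DW \<inter> Df) \<le> card DW" using fDW by (simp add: card_mono)
    ultimately show ?thesis using W(4) cEW by simp
  qed
  define \<rho> where "\<rho> = inv \<sigma> \<circ> \<tau>"
  have p\<rho>: "\<rho> permutes {..<n}" unfolding \<rho>_def by (rule permutes_compose[OF pt psi])
  have fix\<rho>: "\<And>z. \<rho> z = z \<longleftrightarrow> \<sigma> z = \<tau> z"
    unfolding \<rho>_def using permutes_inv_eq[OF ps] by (metis comp_apply)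
  have WX: "\<And>x. x \<in> W \<Longrightarrow> x < k \<and> \<sigma> x \<noteq> \<tau> x \<and> ret k \<sigma> x = ret k \<tau> x"
    using W(1) by (auto simp: X_def)
  have H1: "inv \<sigma> e \<in> W \<union> DW" if e: "e \<in> DW" for e
  proof -
    have eD: "k \<le> e" "e < n" "us e \<in> W" using e by (auto simp: DW_def D_def)
    show ?thesis
    proof (cases "inv \<sigma> e < k")
      case True
      then have "us e = inv \<sigma> e" unfolding us_def by (rule ret_P1)
      then show ?thesis using eD by simp
    next
      case False
      then have "us e = us (inv \<sigma> e)" unfolding us_def using ret_P2[of k "inv \<sigma>" e] by simp
      then show ?thesis using eD False i\<sigma>n[of e] by (auto simp: DW_def D_def)
    qed
  qed
  have H2: "inv \<sigma> (ret k \<sigma> x) \<in> W \<union> DW" if x: "x \<in> W" for x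
  proof -
    have xk: "x < k" using WX[OF x] by simp
    have r: "ret k \<sigma> x < k" using ret_lt[OF ps kn xk] .
    have rn: "inv \<sigma> (ret k \<sigma> x) < n" using i\<sigma>n r kn by simp
    from ret_back[OF ps r] show ?thesis
    proof
      assume "inv \<sigma> (ret k \<sigma> x) = x" then show ?thesis using x by simp
    next
      assume "k \<le> inv \<sigma> (ret k \<sigma> x) \<and> ret k (inv \<sigma>) (inv \<sigma> (ret k \<sigma> x)) = (if x < k then x else ret k (inv \<sigma>) x)"
      then show ?thesis using xk x rn by (simp add: DW_def D_def us_def)
    qed
  qed
  have inv1: "\<rho> z \<in> W \<union> DW" if z: "z \<in> W \<union> DW" for z
  proof (cases "z \<in> W")
    case True
    note zz = WX[OF True]
    show ?thesis
    proof (cases "\<tau> z < k")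
      case False
      have "ut (\<tau> z) = z" unfolding ut_def using ret_P1[of "inv \<tau>" "\<tau> z" k] it1 zz by simp
      moreover have tD: "\<tau> z \<in> D" using False \<tau>n[of z] zz kn by (simp add: D_def)
      ultimately have "us (\<tau> z) \<in> W" using clos[OF tD] True by simp
      then have "\<tau> z \<in> DW" using tD by (simp add: DW_def)
      then show ?thesis using H1 by (simp add: \<rho>_def)
    next
      case T2: True
      have "ret k \<tau> z = \<tau> z" using T2 by (rule ret_P1)
      then have "\<tau> z = ret k \<sigma> z" using zz by simp
      then show ?thesis using H2[OF True] by (simp add: \<rho>_def)
    qed
  next
    case False
    then have zDW: "z \<in> DW" using z by simp
    then have zD: "z \<in> D" and uz: "us z \<in> W" by (auto simp: DW_def)
    have utz: "ut z \<in> W" using clos[OF zD] uz by simp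
    have zk: "k \<le> z" "z < n" using zD by (auto simp: D_def)
    show ?thesis
    proof (cases "\<tau> z < k")
      case False
      have "ut (\<tau> z) = ut z" unfolding ut_def using ret_P2[of k "inv \<tau>" "\<tau> z"] it1 zk by simp
      moreover have tD: "\<tau> z \<in> D" using False \<tau>n[of z] zk by (simp add: D_def)
      ultimately have "us (\<tau> z) \<in> W" using clos[OF tD] utz by simp
      then have "\<tau> z \<in> DW" using tD by (simp add: DW_def)
      then show ?thesis using H1 by (simp add: \<rho>_def)
    next
      case T2: True
      have uk: "ut z < k" using WX[OF utz] by simp
      have "ret k \<tau> (ut z) = ret k \<tau> z" unfolding ut_def using ret_owner[OF pt _ zk(1)] uk ut_def by simp
      also have "\<dots> = \<tau> z" using T2 by (rule ret_P1)
      finally have "\<tau> z = ret k \<sigma> (ut z)" using WX[OF utz] by simp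
      then show ?thesis using H2[OF utz] by (simp add: \<rho>_def)
    qed
  qed
  have nofix: "\<rho> z \<noteq> z" if "z \<in> U" for z
    using that fix\<rho> WX by (auto simp: U_def DW_def D_def Df_def)
  have invU: "\<forall>z\<in>U. \<rho> z \<in> U"
  proof
    fix z assume zU: "z \<in> U"
    then have "\<rho> z \<in> W \<union> DW" using inv1 by (auto simp: U_def)
    moreover have "\<rho> z \<notin> Df"
    proof
      assume "\<rho> z \<in> Df"
      then have "\<rho> (\<rho> z) = \<rho> z" using fix\<rho> by (simp add: Df_def)
      then have "\<rho> z = z" using permutes_inj[OF p\<rho>] by (simp add: inj_eq)
      then show False using nofix zU by blast
    qed
    ultimately show "\<rho> z \<in> U" by (auto simp: U_def)
  qed
  have perm\<rho>: "permutation \<rho>" using p\<rho> permutation_permutes by blast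
  have fU: "finite U" using fW fDW by (simp add: U_def)
  obtain z where zU: "z \<in> U" and oddz: "odd (card (orbit \<rho> z))"
    using odd_orbit_exists[OF perm\<rho> fU invU] cU by auto
  have orbU: "orbit \<rho> z \<subseteq> U"
  proof
    fix y assume "y \<in> orbit \<rho> z"
    then show "y \<in> U" by (induction rule: orbit.induct) (use invU zU in auto)
  qed
  have c1: "card (orbit \<rho> z) \<le> 2 * (n - k) + 1"
  proof -
    have "card (orbit \<rho> z) \<le> card U" using orbU fU card_mono by blast
    moreover have "card DW \<le> card D" using fD by (intro card_mono) (auto simp: DW_def)
    ultimately show ?thesis using cU cD by simp
  qed
  have c2: "card (orbit \<rho> z) \<ge> 3"
  proof -
    have "z \<in> orbit \<rho> z" by (rule permutation_self_in_orbit[OF perm\<rho>])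
    moreover have "\<rho> z \<in> orbit \<rho> z" by (rule orbit.base)
    moreover have "finite (orbit \<rho> z)" using orbU fU finite_subset by blast
    ultimately have "card {z, \<rho> z} \<le> card (orbit \<rho> z)" by (intro card_mono) auto
    then have "card (orbit \<rho> z) \<ge> 2" using nofix[OF zU] by simp
    moreover have "card (orbit \<rho> z) \<noteq> 2" using oddz by auto
    ultimately show ?thesis by linarith
  qed
  have zn: "z < n" using zU W(1) Xk kn unfolding U_def DW_def D_def by fastforce
  have conj: "\<sigma> ` orbit \<rho> z = orbit (\<tau> \<circ> inv \<sigma>) (\<sigma> z)"
  proof (rule orbit_inverse)
    show "z \<in> orbit \<rho> z" by (rule permutation_self_in_orbit[OF perm\<rho>])
    fix x show "(\<tau> \<circ> inv \<sigma>) (\<sigma> x) = \<sigma> (\<rho> x)" by (simp add: \<rho>_def is1)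
  qed
  have "card (orbit (\<tau> \<circ> inv \<sigma>) (\<sigma> z)) = card (orbit \<rho> z)"
    unfolding conj[symmetric] by (rule card_image) (use permutes_inj[OF ps] inj_on_subset in blast)
  then show False using cyc \<sigma>n[OF zn] oddz c1 c2 by metis
qed


theorem theorem5p2:
  fixes n m d :: nat and \<sigma> \<tau> :: "nat \<Rightarrow> nat"
  assumes "n \<ge> 2"
    and "\<sigma> permutes {..<n}" and "\<tau> permutes {..<n}"
    and "hamming n \<sigma> \<tau> = d"
    and "1 \<le> m" and "m \<le> n - 1"
    and "\<forall>x<n. \<not> (odd (card (orbit (\<tau> \<circ> inv \<sigma>) x))
                    \<and> 3 \<le> card (orbit (\<tau> \<circ> inv \<sigma>) x)
                    \<and> card (orbit (\<tau> \<circ> inv \<sigma>) x) \<le> 2 * m + 1)"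
  shows "int (hamming (n - m) (contract_iter n m \<sigma>) (contract_iter n m \<tau>)) \<ge> int d - 2 * int m"
proof -
  define k where "k = n - m"
  have kn: "k \<le> n" and nk: "n - k = m" using assms(5,6) by (auto simp: k_def)
  have cs: "contract_iter n m \<sigma> = G k \<sigma>" using contract_iter_G[OF assms(2) assms(6)] by (simp add: k_def)
  have ct: "contract_iter n m \<tau> = G k \<tau>" using contract_iter_G[OF assms(3) assms(6)] by (simp add: k_def)
  define B where "B = {x. x < k \<and> ret k \<sigma> x \<noteq> ret k \<tau> x}"
  define A' where "A' = {x. x < k \<and> ret k \<sigma> x = ret k \<tau> x}"
  define Ag where "Ag = {x. x < n \<and> \<sigma> x = \<tau> x}"
  define Dd where "Dd = {x. x < n \<and> \<sigma> x \<noteq> \<tau> x}"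
  define Ak where "Ak = {x. x < k \<and> \<sigma> x = \<tau> x}"
  define X where "X = {x. x < k \<and> \<sigma> x \<noteq> \<tau> x \<and> ret k \<sigma> x = ret k \<tau> x}"
  define Df where "Df = {y. k \<le> y \<and> y < n \<and> \<sigma> y = \<tau> y}"
  have hB: "hamming (n - m) (contract_iter n m \<sigma>) (contract_iter n m \<tau>) = card B"
    unfolding hamming_def cs ct k_def[symmetric] B_def G_def
    by (rule arg_cong[where f = card]) auto
  have hd: "d = card Dd" using assms(4) by (simp add: hamming_def Dd_def)
  have kBA: "card B + card A' = k"
  proof -
    have "B \<union> A' = {..<k}" by (auto simp: B_def A'_def)
    moreover have "B \<inter> A' = {}" by (auto simp: B_def A'_def)
    ultimately show ?thesis using card_Un_disjoint[of B A'] by (simp add: B_def A'_def)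
  qed
  have nAD: "card Ag + card Dd = n"
  proof -
    have "Ag \<union> Dd = {..<n}" by (auto simp: Ag_def Dd_def)
    moreover have "Ag \<inter> Dd = {}" by (auto simp: Ag_def Dd_def)
    ultimately show ?thesis using card_Un_disjoint[of Ag Dd] by (simp add: Ag_def Dd_def)
  qed
  have c1: "card A' \<le> card Ak + card X"
  proof -
    have "A' \<subseteq> Ak \<union> X"
    proof
      fix x assume "x \<in> A'"
      then show "x \<in> Ak \<union> X" by (cases "\<sigma> x = \<tau> x") (auto simp: A'_def Ak_def X_def)
    qed
    then have "card A' \<le> card (Ak \<union> X)" by (intro card_mono) (auto simp: Ak_def X_def)
    also have "\<dots> \<le> card Ak + card X" by (rule card_Un_le)
    finally show ?thesis .
  qed
  have c2: "card Ak + card Df \<le> card Ag"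
  proof -
    have "card Ak + card Df = card (Ak \<union> Df)"
      by (rule card_Un_disjoint[symmetric]) (auto simp: Ak_def Df_def)
    also have "\<dots> \<le> card Ag" using kn by (intro card_mono) (auto simp: Ak_def Df_def Ag_def)
    finally show ?thesis .
  qed
  have c3: "card X \<le> m + card Df"
    using new_agree_bound[OF assms(2) assms(3) kn] assms(7) nk unfolding X_def Df_def by simp
  have "card A' \<le> card Ag + m" using c1 c2 c3 by linarith
  then show ?thesis unfolding hB hd using kBA nAD k_def assms(6) by linarith
qed


end
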